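(* For all integers $t,k>3$ satisfying $(2t)^k-1<t^k(2t-1)$, there exists a simple undirected graph $U$ with $t^k$ vertices, minimum degree at least $2$ and diameter $k$, such that every directed graph $G$ with $U(G)=U$ is an equilibrium graph in the MAX version of the bounded budget network creation game whose budgets are the outdegrees of the vertices of $G$.
   Context: Bounded budget network creation game $(b_1,\dots,b_n)$-BG: $n$ players with integer budgets $0\le b_i\le n-1$. A strategy of player $i$ is a set $S_i\subseteq\{1,\dots,n\}\setminus\{i\}$ with $|S_i|=b_i$; a profile is realized by the directed graph $G$ on $u_1,\dots,u_n$ with an arc $\overrightarrow{u_iu_j}$ iff $j\in S_i$. Thus a directed graph $G$ (without loops) in which vertex $u_i$ has outdegree $b_i$ is a realization of $(b_1,\dots,b_n)$-BG. $U(G)$ is the undirected multigraph obtained by ignoring arc directions. $\operatorname{dist}(u,v)$ is the distance in $U(G)$, defined as $n^2$ between different components. MAX cost: $c_{MAX}(u)=\max_v\operatorname{dist}(u,v)+(\kappa-1)n^2$, $\kappa$ the number of components of $U(G)$. An equilibrium graph in the MAX version is a realization in which no vertex can decrease its MAX cost by changing its own strategy while the other strategies are fixed. *)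

theory Defs
  imports Main
begin

text \<open>Vertices are 0..<n (vertex u_i is i). A directed graph is a set of arcs (pairs).
  An (undirected, simple) graph is a symmetric irreflexive set of pairs.\<close>

definition digraph_on :: "nat \<Rightarrow> (nat \<times> nat) set \<Rightarrow> bool" where
  "digraph_on n G \<longleftrightarrow> G \<subseteq> {0..<n} \<times> {0..<n} \<and> (\<forall>u. (u, u) \<notin> G)"

definition simple_graph_on :: "nat \<Rightarrow> (nat \<times> nat) set \<Rightarrow> bool" where
  "simple_graph_on n E \<longleftrightarrow> E \<subseteq> {0..<n} \<times> {0..<n} \<and> (\<forall>u. (u, u) \<notin> E) \<and> sym E"

text \<open>Adjacency of the underlying undirected multigraph U(G) (multiplicities are irrelevant
  for distances).\<close>
definition und :: "(nat \<times> nat) set \<Rightarrow> (nat \<times> nat) set" where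
  "und G = G \<union> G\<inverse>"

text \<open>U(G) equals the simple graph U: the underlying multigraph has exactly the edges of U,
  each with multiplicity one (no pair of opposite arcs).\<close>
definition underlying_is :: "(nat \<times> nat) set \<Rightarrow> (nat \<times> nat) set \<Rightarrow> bool" where
  "underlying_is G U \<longleftrightarrow> und G = U \<and> (\<forall>u v. (u, v) \<in> G \<longrightarrow> (v, u) \<notin> G)"

definition gdist :: "nat \<Rightarrow> (nat \<times> nat) set \<Rightarrow> nat \<Rightarrow> nat \<Rightarrow> nat" where
  "gdist n R u v = (if (u, v) \<in> R\<^sup>* then (LEAST d. (u, v) \<in> R ^^ d) else n ^ 2)"

definition num_components :: "nat \<Rightarrow> (nat \<times> nat) set \<Rightarrow> nat" where
  "num_components n R = card ({0..<n} // (R\<^sup>*))"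

definition min_degree_ge :: "nat \<Rightarrow> (nat \<times> nat) set \<Rightarrow> nat \<Rightarrow> bool" where
  "min_degree_ge n E d \<longleftrightarrow> (\<forall>u<n. card (E `` {u}) \<ge> d)"

definition diameter :: "nat \<Rightarrow> (nat \<times> nat) set \<Rightarrow> nat" where
  "diameter n E = Max {gdist n E u v | u v. u < n \<and> v < n}"

definition cost_max :: "nat \<Rightarrow> (nat \<times> nat) set \<Rightarrow> nat \<Rightarrow> nat" where
  "cost_max n G u = Max {gdist n (und G) u v | v. v < n}
      + (num_components n (und G) - 1) * n ^ 2"

text \<open>Vertex i replaces its strategy (out-neighbourhood) by S.\<close>
definition deviate :: "(nat \<times> nat) set \<Rightarrow> nat \<Rightarrow> nat set \<Rightarrow> (nat \<times> nat) set" where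
  "deviate G i S = {(a, b) \<in> G. a \<noteq> i} \<union> ({i} \<times> S)"

definition max_equilibrium :: "nat \<Rightarrow> (nat \<times> nat) set \<Rightarrow> bool" where
  "max_equilibrium n G \<longleftrightarrow> digraph_on n G \<and>
     (\<forall>i<n. \<forall>S. S \<subseteq> {0..<n} - {i} \<and> card S = card (G `` {i}) \<longrightarrow>
        cost_max n G i \<le> cost_max n (deviate G i S) i)"

end

theory Submission
  imports Defs
begin


lemma layer_bound:
  fixes R :: "('a \<times> 'a) set"
  assumes deg: "\<And>w. finite (R `` {w}) \<and> card (R `` {w}) \<le> D"
  shows "finite {v. (i,v) \<in> R^^j} \<and> card {v. (i,v) \<in> R^^j} \<le> D^j"
proof (induction j)
  case 0
  have "{v. (i,v) \<in> R^^0} = {i}" by auto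
  then show ?case by simp
next
  case (Suc j)
  let ?L = "{v. (i,v) \<in> R^^j}"
  have eq: "{v. (i,v) \<in> R^^Suc j} = (\<Union>x\<in>?L. R `` {x})" by (auto simp: relpow_Suc_I)
  have fin: "finite (\<Union>x\<in>?L. R `` {x})" using Suc deg by auto
  have "card (\<Union>x\<in>?L. R `` {x}) \<le> (\<Sum>x\<in>?L. card (R``{x}))" by (rule card_UN_le) (use Suc in auto)
  also have "\<dots> \<le> (\<Sum>x\<in>?L. D)" by (rule sum_mono) (use deg in auto)
  also have "\<dots> = card ?L * D" by simp
  also have "\<dots> \<le> D^j * D" using Suc by simp
  finally show ?case using eq fin by (simp add: mult.commute)
qed

lemma ball_bound:
  fixes R :: "('a \<times> 'a) set"
  assumes deg: "\<And>w. finite (R `` {w}) \<and> card (R `` {w}) \<le> D"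
  shows "finite {v. \<exists>d<m. (i,v) \<in> R^^d} \<and> card {v. \<exists>d<m. (i,v) \<in> R^^d} \<le> (\<Sum>d<m. D^d)"
proof -
  have eq: "{v. \<exists>d<m. (i,v) \<in> R^^d} = (\<Union>d<m. {v. (i,v) \<in> R^^d})" by auto
  have "card (\<Union>d<m. {v. (i,v) \<in> R^^d}) \<le> (\<Sum>d<m. card {v. (i,v) \<in> R^^d})"
    by (rule card_UN_le) auto
  also have "\<dots> \<le> (\<Sum>d<m. D^d)" by (rule sum_mono) (use layer_bound[OF deg] in auto)
  finally show ?thesis using eq layer_bound[OF deg] by simp
qed

lemma reduce_path:
  "(i,v) \<in> R^^d \<Longrightarrow> \<exists>d'\<le>d. (i,v) \<in> (R - UNIV \<times> {i})^^d'"
proof (induction d arbitrary: v)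
  case 0 then show ?case by auto
next
  case (Suc d)
  then obtain w where w: "(i,w) \<in> R^^d" "(w,v) \<in> R" by auto
  then obtain d' where d': "d' \<le> d" "(i,w) \<in> (R - UNIV \<times> {i})^^d'" using Suc.IH by blast
  show ?case
  proof (cases "v = i")
    case True then show ?thesis by (intro exI[of _ 0]) auto
  next
    case False
    then have "(w,v) \<in> R - UNIV \<times> {i}" using w by auto
    then have "(i,v) \<in> (R - UNIV \<times> {i})^^Suc d'" using d' by (meson relpow_Suc_I)
    then show ?thesis using d' by (intro exI[of _ "Suc d'"]) auto
  qed
qed

lemma far_vertex:
  assumes deg: "\<And>w. finite ((R - UNIV \<times> {i}) `` {w}) \<and> card ((R - UNIV \<times> {i}) `` {w}) \<le> D"
    and small: "(\<Sum>d<k. D^d) < n" and kn: "k \<le> n^2"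
  shows "\<exists>v<n. gdist n R i v \<ge> k"
proof -
  let ?B = "{v. \<exists>d<k. (i,v) \<in> (R - UNIV \<times> {i})^^d}"
  have "card ?B < card {0..<n}" using ball_bound[OF deg, of k i] small by simp
  moreover have "finite ?B" using ball_bound[OF deg, of k i] by simp
  ultimately have "\<not> {0..<n} \<subseteq> ?B"
    using card_mono[of ?B "{0..<n}"] by linarith
  then obtain v where v0: "v \<in> {0..<n}" "v \<notin> ?B" by blast
  then have v: "v < n" "v \<notin> ?B" by auto
  have nod: "(i,v) \<notin> R^^d" if dk: "d < k" for d
  proof
    assume "(i,v) \<in> R^^d"
    from reduce_path[OF this] obtain d' where d': "d' \<le> d" "(i,v) \<in> (R - UNIV \<times> {i})^^d'" by blast
    have "d' < k" using d'(1) dk by linarith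
    then have "v \<in> ?B" using d'(2) by (intro CollectI exI[of _ d'] conjI)
    then show False using v(2) by contradiction
  qed
  have "gdist n R i v \<ge> k"
  proof (cases "(i,v) \<in> R\<^sup>*")
    case True
    then obtain d where "(i,v) \<in> R^^d" using rtrancl_power by blast
    then have "(i,v) \<in> R^^(LEAST d. (i,v) \<in> R^^d)" by (rule LeastI)
    then have "\<not> (LEAST d. (i,v) \<in> R^^d) < k" using nod by (metis (no_types, lifting))
    then show ?thesis using True by (simp add: gdist_def)
  next
    case False then show ?thesis using kn by (simp add: gdist_def)
  qed
  then show ?thesis using v by blast
qed

lemma gdist_le:
  assumes "(u,v) \<in> R^^d" shows "gdist n R u v \<le> d"
proof -
  have "(u,v) \<in> R\<^sup>*" using assms relpow_imp_rtrancl by blast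
  then show ?thesis using assms by (simp add: gdist_def Least_le)
qed



definition dB :: "nat \<Rightarrow> nat \<Rightarrow> (nat \<times> nat) set" where
  "dB t k = {(u,v). u < t^k \<and> v < t^k \<and> u \<noteq> v \<and>
     (\<exists>a<t. v = (u*t+a) mod t^k \<or> u = (v*t+a) mod t^k)}"

lemma dB_simple: "simple_graph_on (t^k) (dB t k)"
  unfolding simple_graph_on_def dB_def sym_def by auto

lemma tk_split: "k \<ge> 1 \<Longrightarrow> t^k = t * t^(k-1)"
  by (metis Suc_diff_le diff_Suc_1 power_Suc)

lemma shift_mod:
  fixes v a t k :: nat
  assumes "a < t" "k \<ge> 1"
  shows "(v*t+a) mod t^k = t * (v mod t^(k-1)) + a"
proof -
  have "(v*t+a) mod (t * t^(k-1)) = t * ((v*t+a) div t mod t^(k-1)) + (v*t+a) mod t"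
    using mod_mult2_eq[of "v*t+a" t "t^(k-1)"] by presburger
  moreover have "(v*t+a) div t = v" using assms by simp
  moreover have "(v*t+a) mod t = a" using assms by simp
  ultimately have "(v*t+a) mod (t * t^(k-1)) = t * (v mod t^(k-1)) + a" by simp
  moreover have "t^k = t*t^(k-1)" by (rule tk_split[OF assms(2)])
  ultimately show ?thesis by simp
qed

lemma in_nb:
  fixes v a t k w :: nat
  assumes "a < t" "k \<ge> 1" "v < t^k" "(v*t+a) mod t^k = w"
  shows "v \<in> (\<lambda>b. w div t + b * t^(k-1)) ` {..<t}"
proof -
  have w: "w = t * (v mod t^(k-1)) + a" using shift_mod[OF assms(1,2), of v] assms(4) by simp
  have t0: "t > 0" using assms(1) by simp
  have "w div t = (a + (v mod t^(k-1)) * t) div t" using w by (simp add: algebra_simps)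
  also have "\<dots> = a div t + v mod t^(k-1)" using t0 by simp
  finally have wd: "w div t = v mod t^(k-1)" using assms(1) by simp
  have "v < t * t^(k-1)" using assms(3) tk_split[OF assms(2), of t] by simp
  then have "v div t^(k-1) < t" by (rule less_mult_imp_div_less)
  moreover have "v = w div t + (v div t^(k-1)) * t^(k-1)" using wd mod_div_mult_eq[of v "t^(k-1)"] by simp
  ultimately show ?thesis by blast
qed

lemma dB_deg:
  assumes "k \<ge> 1"
  shows "finite (dB t k `` {w}) \<and> card (dB t k `` {w}) \<le> 2*t"
proof -
  let ?A = "(\<lambda>a. (w*t+a) mod t^k) ` {..<t}"
  let ?B = "(\<lambda>b. w div t + b * t^(k-1)) ` {..<t}"
  have sub: "dB t k `` {w} \<subseteq> ?A \<union> ?B"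
  proof
    fix v assume "v \<in> dB t k `` {w}"
    then obtain a where a: "a < t" "w < t^k" "v < t^k" "v = (w*t+a) mod t^k \<or> w = (v*t+a) mod t^k"
      unfolding dB_def by auto
    then show "v \<in> ?A \<union> ?B" using in_nb[OF a(1) assms a(3)] by auto
  qed
  have "card (?A \<union> ?B) \<le> card ?A + card ?B" by (rule card_Un_le)
  also have "\<dots> \<le> t + t" using card_image_le[of "{..<t}"] by (metis add_mono card_lessThan finite_lessThan)
  finally have "card (?A \<union> ?B) \<le> 2*t" by simp
  moreover have "finite (?A \<union> ?B)" by simp
  ultimately show ?thesis using sub card_mono finite_subset by (metis order_trans)
qed

lemma dB_mindeg:
  assumes "t \<ge> 3" "k \<ge> 1" "u < t^k"
  shows "card (dB t k `` {u}) \<ge> 2"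
proof -
  define c where "c = t * (u mod t^(k-1))"
  have ck: "c + a < t^k" if "a < t" for a
  proof -
    have "u mod t^(k-1) < t^(k-1)" using assms by simp
    then have "u mod t^(k-1) + 1 \<le> t^(k-1)" by linarith
    then have "t * (u mod t^(k-1)) + t \<le> t * t^(k-1)" by (metis mult.commute mult_le_mono1 distrib_right mult_1)
    then show ?thesis using that tk_split[OF assms(2), of t] c_def by linarith
  qed
  have mem: "c + a \<in> dB t k `` {u}" if "a < t" "c + a \<noteq> u" for a
  proof -
    have "c + a = (u*t+a) mod t^k" using shift_mod[OF that(1) assms(2)] c_def by simp
    then show ?thesis unfolding dB_def using that ck[OF that(1)] assms by auto
  qed
  have fin: "finite (dB t k `` {u})" using dB_deg assms by blast
  obtain x y where xy: "x \<noteq> y" "x \<in> dB t k `` {u}" "y \<in> dB t k `` {u}"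
  proof (cases "u = c")
    case True
    have "c+1 \<in> dB t k `` {u}" using mem[of 1] True assms(1) by simp
    moreover have "c+2 \<in> dB t k `` {u}" using mem[of 2] True assms(1) by simp
    ultimately show ?thesis using that[of "c+1" "c+2"] by simp
  next
    case False
    show ?thesis
    proof (cases "u = c + 1")
      case True
      have "c \<in> dB t k `` {u}" using mem[of 0] True assms(1) by simp
      moreover have "c+2 \<in> dB t k `` {u}" using mem[of 2] True assms(1) by simp
      ultimately show ?thesis using that[of "c" "c+2"] by simp
    next
      case False2: False
      have "c \<in> dB t k `` {u}" using mem[of 0] False assms(1) by simp
      moreover have "c+1 \<in> dB t k `` {u}" using mem[of 1] False2 assms(1) by simp
      ultimately show ?thesis using that[of "c" "c+1"] by simp
    qed
  qed
  then have "{x,y} \<subseteq> dB t k `` {u}" by auto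
  then have "card {x,y} \<le> card (dB t k `` {u})" using fin card_mono by blast
  then show ?thesis using xy by simp
qed

lemma relpow_refl_le:
  "(x,y) \<in> (R \<union> Id)^^m \<Longrightarrow> \<exists>d\<le>m. (x,y) \<in> R^^d"
proof (induction m arbitrary: y)
  case 0 then show ?case by auto
next
  case (Suc m)
  then obtain z where z: "(x,z) \<in> (R \<union> Id)^^m" "(z,y) \<in> R \<union> Id" by auto
  from Suc.IH[OF z(1)] obtain d where d: "d \<le> m" "(x,z) \<in> R^^d" by blast
  show ?case
  proof (cases "(z,y) \<in> R")
    case True
    then have "(x,y) \<in> R^^Suc d" using d relpow_Suc_I by metis
    then show ?thesis using d by (intro exI[of _ "Suc d"]) auto
  next
    case False then have "z = y" using z by auto
    then show ?thesis using d by (intro exI[of _ d]) auto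
  qed
qed

lemma step_arith:
  fixes u y t j N :: nat
  shows "(u * t^(Suc j) + y) mod N = (((u*t^j + y div t) mod N) * t + y mod t) mod N"
proof -
  have "(((u*t^j + y div t) mod N) * t + y mod t) mod N = ((u*t^j + y div t) * t + y mod t) mod N"
    by (metis mod_add_left_eq mod_mult_left_eq)
  also have "(u*t^j + y div t) * t + y mod t = u * t^(Suc j) + y"
    by (simp add: algebra_simps)
  finally show ?thesis by simp
qed

lemma dB_path:
  assumes "t \<ge> 2" "k \<ge> 1" "u < t^k" "v < t^k"
  shows "\<exists>d\<le>k. (u,v) \<in> (dB t k)^^d"
proof -
  define w where "w j = (u * t^j + v div t^(k-j)) mod t^k" for j
  have step: "(w j, w (Suc j)) \<in> dB t k \<union> Id" if "j < k" for j
  proof -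
    define y where "y = v div t^(k - Suc j)"
    have "t^(k-j) = t^(k - Suc j) * t" using that
      by (metis Suc_diff_Suc mult.commute power_Suc)
    then have yd: "v div t^(k-j) = y div t" unfolding y_def by (simp add: div_mult2_eq)
    have ws: "w (Suc j) = (w j * t + y mod t) mod t^k"
      unfolding w_def yd y_def[symmetric] using step_arith by simp
    have tp: "t^k > 0" using assms by simp
    have "y mod t < t" using assms by simp
    then show ?thesis using ws tp unfolding dB_def by (auto simp: w_def)
  qed
  have path: "j \<le> k \<Longrightarrow> (u, w j) \<in> (dB t k \<union> Id)^^j" for j
  proof (induction j)
    case 0
    have "v div t^k = 0" using assms by simp
    then have "w 0 = u" using assms by (simp add: w_def)
    then show ?case by simp
  next
    case (Suc j)
    then show ?case using step[of j] relpow_Suc_I by (metis Suc_leD Suc_le_lessD)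
  qed
  have "w k = v" using assms by (simp add: w_def)
  moreover have "(u, w k) \<in> (dB t k \<union> Id)^^k" using path[of k] by simp
  ultimately have "(u, v) \<in> (dB t k \<union> Id)^^k" by simp
  then show ?thesis by (rule relpow_refl_le)
qed

lemma dB_conn:
  assumes "t \<ge> 2" "k \<ge> 1"
  shows "num_components (t^k) (dB t k) = 1"
proof -
  let ?R = "(dB t k)\<^sup>*"
  have symR: "sym ?R" using dB_simple[of t k] sym_rtrancl unfolding simple_graph_on_def by blast
  have rel: "(x,y) \<in> ?R" if "x < t^k" "y < t^k" for x y
    using dB_path[OF assms that] relpow_imp_rtrancl by blast
  have cls: "?R `` {x} = ?R `` {0}" if "x < t^k" for x
  proof -
    have p: "t^k > 0" using assms by simp
    have "(x,0) \<in> ?R" "(0,x) \<in> ?R" using rel that p by auto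
    then show ?thesis by (auto intro: rtrancl_trans)
  qed
  have p: "t^k > 0" using assms by simp
  have "{0..<t^k} // ?R = (\<lambda>x. ?R `` {x}) ` {0..<t^k}"
    unfolding quotient_def by blast
  also have "\<dots> = (\<lambda>x. ?R `` {0}) ` {0..<t^k}"
    by (rule image_cong) (simp_all add: cls)
  also have "\<dots> = {?R `` {0}}" using p by (simp add: image_constant_conv)
  finally have "{0..<t^k} // ?R = {?R `` {0}}" .
  then show ?thesis unfolding num_components_def by simp
qed



lemma geom_int: fixes x :: int shows "(x - 1) * (\<Sum>d<k. x^d) = x^k - 1"
  by (induction k) (simp_all add: algebra_simps)

lemma hyp_conv:
  fixes t k :: nat
  assumes "t > 0" "(2 * int t) ^ k - 1 < int t ^ k * (2 * int t - 1)"
  shows "(\<Sum>d<k. (2*t)^d) < t^k"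
proof -
  let ?S = "(\<Sum>d<k. (2 * int t)^d)"
  have "(2 * int t - 1) * ?S < (2 * int t - 1) * int t ^ k"
    using geom_int[of "2 * int t" k] assms(2) by (simp add: mult.commute)
  moreover have "2 * int t - 1 > 0" using assms(1) by simp
  ultimately have "?S < int t ^ k" by simp
  moreover have "int (\<Sum>d<k. (2*t)^d) = ?S" by simp
  ultimately show ?thesis by (metis of_nat_less_iff of_nat_power)
qed

lemma dev_deg:
  assumes dg: "digraph_on n G" and ui: "underlying_is G U"
    and cS: "card S = card (G``{i})" and Sn: "S \<subseteq> {0..<n} - {i}"
    and degU: "\<And>w. finite (U``{w}) \<and> card (U``{w}) \<le> D"
  shows "finite ((und (deviate G i S) - UNIV \<times> {i})``{w}) \<and> card ((und (deviate G i S) - UNIV \<times> {i})``{w}) \<le> D"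
proof -
  have UG: "U = G \<union> G\<inverse>" using ui unfolding underlying_is_def und_def by simp
  have finG: "finite G" using dg unfolding digraph_on_def by (meson finite_SigmaI finite_atLeastLessThan finite_subset)
  show ?thesis
  proof (cases "w = i")
    case True
    have sub: "(und (deviate G i S) - UNIV \<times> {i})``{w} \<subseteq> S \<union> G\<inverse>``{i}"
      using True unfolding und_def deviate_def by auto
    have f1: "finite S" using Sn finite_subset by blast
    have f2: "finite (G\<inverse>``{i})" "finite (G``{i})" using finG by (simp_all add: finite_Image)
    have disj: "G``{i} \<inter> G\<inverse>``{i} = {}" using ui unfolding underlying_is_def by auto
    have "card (S \<union> G\<inverse>``{i}) \<le> card S + card (G\<inverse>``{i})" by (rule card_Un_le)
    also have "\<dots> = card (G``{i} \<union> G\<inverse>``{i})" using cS card_Un_disjoint[OF f2(2) f2(1) disj] by simp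
    also have "G``{i} \<union> G\<inverse>``{i} = U``{i}" using UG by auto
    also have "card (U``{i}) \<le> D" using degU by blast
    finally have "card (S \<union> G\<inverse>``{i}) \<le> D" .
    moreover have "finite (S \<union> G\<inverse>``{i})" using f1 f2 by simp
    ultimately show ?thesis using sub card_mono finite_subset by (metis order_trans)
  next
    case False
    have sub: "(und (deviate G i S) - UNIV \<times> {i})``{w} \<subseteq> U``{w}"
      using False UG unfolding und_def deviate_def by auto
    then show ?thesis using degU card_mono finite_subset by (metis order_trans)
  qed
qed

lemma Max_set_le:
  fixes n :: nat
  assumes "\<And>v. v < n \<Longrightarrow> f v \<le> (k::nat)" "n > 0"
  shows "Max {f v | v. v < n} \<le> k"
proof -
  have eq: "{f v | v. v < n} = f ` {..<n}" by auto
  have "Max (f ` {..<n}) \<in> f ` {..<n}" using assms(2) by (intro Max_in) auto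
  then show ?thesis using eq assms(1) by auto
qed

lemma Max_set_ge:
  assumes "v < n" shows "f v \<le> Max {f v | v. v < (n::nat)}"
proof -
  have eq: "{f v | v. v < n} = f ` {..<n}" by auto
  show ?thesis unfolding eq using assms by (intro Max_ge[OF finite_imageI[OF finite_lessThan]]) auto
qed

theorem mainTheorem15:
  fixes t k :: nat
  assumes "t > 3" and "k > 3"
    and "(2 * int t) ^ k - 1 < int t ^ k * (2 * int t - 1)"
  shows "\<exists>U. simple_graph_on (t ^ k) U \<and> min_degree_ge (t ^ k) U 2
           \<and> diameter (t ^ k) U = k
           \<and> (\<forall>G. digraph_on (t ^ k) G \<and> underlying_is G U \<longrightarrow> max_equilibrium (t ^ k) G)"
proof -
  let ?n = "t^k"
  let ?U = "dB t k"
  have t2: "t \<ge> 2" "t \<ge> 3" and k1: "k \<ge> 1" using assms by auto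
  have small: "(\<Sum>d<k. (2*t)^d) < ?n" using hyp_conv assms by simp
  have n0: "?n > 0" using t2 by simp
  have kn: "k \<le> ?n^2"
  proof -
    have "k < 2^k" by (rule less_exp)
    also have "\<dots> \<le> t^k" using t2 by (simp add: power_mono)
    also have "\<dots> \<le> (t^k)^2" by (simp add: power2_eq_square le_square)
    finally show ?thesis by simp
  qed
  have degU: "\<And>w. finite (?U``{w}) \<and> card (?U``{w}) \<le> 2*t" using dB_deg k1 by blast
  have all_le: "gdist ?n ?U u v \<le> k" if uv: "u < ?n" "v < ?n" for u v
  proof -
    obtain d where "d \<le> k" "(u,v) \<in> ?U^^d" using dB_path[OF t2(1) k1 uv] by blast
    then show ?thesis using gdist_le[where n="?n"] by (meson order_trans)
  qed
  have comp: "num_components ?n ?U = 1" using dB_conn t2 k1 by blast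
  have simple: "simple_graph_on ?n ?U" by (rule dB_simple)
  have mindeg: "min_degree_ge ?n ?U 2" unfolding min_degree_ge_def using dB_mindeg t2 k1 by blast
  have diam: "diameter ?n ?U = k"
  proof -
    have deg0: "\<And>w. finite ((?U - UNIV \<times> {0})``{w}) \<and> card ((?U - UNIV \<times> {0})``{w}) \<le> 2*t"
    proof -
      fix w
      have "(?U - UNIV \<times> {0})``{w} \<subseteq> ?U``{w}" by auto
      then show "finite ((?U - UNIV \<times> {0})``{w}) \<and> card ((?U - UNIV \<times> {0})``{w}) \<le> 2*t"
        using degU[of w] card_mono finite_subset by (metis order_trans)
    qed
    obtain v where v: "v < ?n" "gdist ?n ?U 0 v \<ge> k" using far_vertex[OF deg0 small kn] by blast
    let ?M = "{gdist ?n ?U u v | u v. u < ?n \<and> v < ?n}"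
    have fin: "finite ?M" by (rule finite_subset[of _ "{..k}"]) (use all_le in auto)
    have mem: "k \<in> ?M" using v all_le[OF n0 v(1)] n0 by (intro CollectI exI[of _ 0] exI[of _ v]) auto
    have "Max ?M = k" by (rule Max_eqI[OF fin]) (use all_le mem in auto)
    then show ?thesis unfolding diameter_def .
  qed
  have eq: "max_equilibrium ?n G" if G: "digraph_on ?n G" "underlying_is G ?U" for G
    unfolding max_equilibrium_def
  proof (intro conjI allI impI)
    show "digraph_on ?n G" by (rule G(1))
    fix i S assume i: "i < ?n" and SS: "S \<subseteq> {0..<?n} - {i} \<and> card S = card (G `` {i})"
    have uG: "und G = ?U" using G(2) unfolding underlying_is_def by simp
    have "cost_max ?n G i = Max {gdist ?n ?U i v | v. v < ?n}"
      unfolding cost_max_def uG comp by simp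
    also have "\<dots> \<le> k" using Max_set_le[of ?n "\<lambda>v. gdist ?n ?U i v" k] all_le[OF i] n0 by blast
    finally have c1: "cost_max ?n G i \<le> k" .
    let ?R = "und (deviate G i S)"
    have degR: "\<And>w. finite ((?R - UNIV \<times> {i})``{w}) \<and> card ((?R - UNIV \<times> {i})``{w}) \<le> 2*t"
      using dev_deg[OF G(1) G(2) _ _ degU] SS by blast
    obtain v where v: "v < ?n" "gdist ?n ?R i v \<ge> k" using far_vertex[OF degR small kn] by blast
    have "k \<le> Max {gdist ?n ?R i v | v. v < ?n}"
      using Max_set_ge[of v ?n "\<lambda>v. gdist ?n ?R i v"] v by simp
    also have "\<dots> \<le> cost_max ?n (deviate G i S) i" unfolding cost_max_def by simp
    finally show "cost_max ?n G i \<le> cost_max ?n (deviate G i S) i" using c1 by simp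
  qed
  show ?thesis using simple mindeg diam eq by blast
qed


end
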